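(* Let $p\ge 3$ be a prime, $n\ge 2$ an integer, and $N=p^nN_1$, where either $N_1=1$ or $N_1=q_1q_2\cdots q_r$ with $q_1,\dots,q_r$ distinct primes different from $p$ such that $(q_i-1)\mid(p-1)$ for every $i$. Let $a,b$ be integers with $a\not\equiv 0,-1 \pmod p$ and $a\not\equiv -1\pmod{q_i}$ for every $i$, and let $\pi(x)=x^p+ax+b$ (such a $\pi$ permutes $\mathbb{Z}_N$). Let $\mathbf{s}$ be a Zadoff–Chu sequence of length $N$. Then (i) the interleaved sequence $\mathbf{s}\circ\pi$ is a CAZAC sequence; (ii) the interleaved sequence $\mathbf{s}\circ\pi^{-1}$ is a CAZAC sequence.
   Context: $\xi_N=e^{-2\pi\sqrt{-1}/N}$, and $\xi_N^{x/2}$ means $e^{-\pi\sqrt{-1}x/N}$. A Zadoff–Chu (ZC) sequence of length $N$ is $\mathbf{s}=(s(0),\dots,s(N-1))$ with $s(k)=\xi_N^{f(k)}$, $f(k)=u\,(k^2+(N\bmod 2)k+2lk)/2$, where $u$ is an integer with $\gcd(u,N)=1$ and $l$ is an arbitrary integer. A polynomial $\pi\in\mathbb{Z}_N[x]$ is a permutation polynomial (PP) over $\mathbb{Z}_N$ if $k\mapsto \pi(k)\bmod N$ is a bijection of $\mathbb{Z}_N=\{0,\dots,N-1\}$; $\pi^{-1}$ denotes the inverse permutation of $\mathbb{Z}_N$. For a permutation $\sigma$ of $\mathbb{Z}_N$, the interleaved sequence $\mathbf{s}\circ\sigma$ has $k$-th term $s(\sigma(k))$. The periodic auto-correlation of a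 length-$N$ sequence $\mathbf{y}$ is $\theta(d)=\sum_{k=0}^{N-1}y(k)y^*(k+d)$ with indices mod $N$. A sequence is CAZAC if all entries have modulus 1 and $\theta(d)=0$ for all $0<d<N$. *)

theory Defs
  imports Complex_Main "HOL-Number_Theory.Number_Theory"
begin

text \<open>Zadoff-Chu sequence of length N with parameters u, l:
  s(k) = xi_N^(f(k)), f(k) = u (k^2 + (N mod 2) k + 2 l k)/2, xi_N = exp(-2 pi i/N),
  i.e. s(k) = exp(- pi i u (k^2 + (N mod 2) k + 2 l k) / N).\<close>
definition zc_seq :: "nat \<Rightarrow> int \<Rightarrow> int \<Rightarrow> nat \<Rightarrow> complex" where
  "zc_seq N u l k = cis (- pi * real_of_int (u * (int k ^ 2 + int (N mod 2) * int k + 2 * l * int k)) / real N)"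

definition pp_map :: "nat \<Rightarrow> nat \<Rightarrow> int \<Rightarrow> int \<Rightarrow> nat \<Rightarrow> nat" where
  "pp_map N p a b k = nat ((int k ^ p + a * int k + b) mod int N)"

definition interleave :: "(nat \<Rightarrow> complex) \<Rightarrow> (nat \<Rightarrow> nat) \<Rightarrow> nat \<Rightarrow> complex" where
  "interleave s \<sigma> k = s (\<sigma> k)"

definition perm_inv :: "nat \<Rightarrow> (nat \<Rightarrow> nat) \<Rightarrow> nat \<Rightarrow> nat" where
  "perm_inv N \<sigma> = inv_into {..<N} \<sigma>"

definition autocorr :: "nat \<Rightarrow> (nat \<Rightarrow> complex) \<Rightarrow> nat \<Rightarrow> complex" where
  "autocorr N y d = (\<Sum>k<N. y k * cnj (y ((k + d) mod N)))"

definition CAZAC :: "nat \<Rightarrow> (nat \<Rightarrow> complex) \<Rightarrow> bool" where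
  "CAZAC N y \<longleftrightarrow> (\<forall>k<N. cmod (y k) = 1) \<and> (\<forall>d. 0 < d \<and> d < N \<longrightarrow> autocorr N y d = 0)"

end

theory Submission
  imports Defs
begin

lemma diff_pow_dvd:
  fixes x y :: int
  shows "x - y dvd x ^ k - y ^ k"
  by (metis dvd_def power_diff_sumr2)

lemma binom_dvd:
  fixes y s :: int
  assumes "prime p"
  shows "int p * s dvd (y + s) ^ p - y ^ p - s ^ p"
proof -
  have p2: "p \<ge> 2" using assms prime_ge_2_nat by blast
  define f where "f k = of_nat (p choose k) * s ^ k * y ^ (p - k)" for k
  have e: "(s + y) ^ p = (\<Sum>k\<le>p. f k)" unfolding f_def by (rule binomial_ring)
  have split: "{..p} = insert 0 (insert p {1..p-1})" using p2 by auto
  have "(\<Sum>k\<le>p. f k) = f 0 + (f p + (\<Sum>k\<in>{1..p-1}. f k))"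
    unfolding split using p2 by (simp add: sum.insert)
  moreover have "f 0 = y ^ p" "f p = s ^ p" unfolding f_def by auto
  ultimately have eq: "(y + s) ^ p - y ^ p - s ^ p = (\<Sum>k\<in>{1..p-1}. f k)"
    using e by (simp add: add.commute)
  have "int p * s dvd f k" if "k \<in> {1..p-1}" for k
  proof -
    have "p dvd p choose k" using that p2 assms by (intro dvd_choose_prime) auto
    hence "int p dvd of_nat (p choose k)" by (simp add: int_dvd_int_iff)
    moreover have "s dvd s ^ k" using that by auto
    ultimately show ?thesis unfolding f_def by (simp add: mult_dvd_mono)
  qed
  then show ?thesis unfolding eq by (rule dvd_sum)
qed

lemma second_diff_dvd:
  fixes x d h :: int
  assumes "prime p"
  shows "int p * d * h dvd (x + d + h) ^ p - (x + d) ^ p - (x + h) ^ p + x ^ p"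
proof -
  have p2: "p \<ge> 2" using assms prime_ge_2_nat by blast
  define g where "g k = of_nat (p choose k) * h ^ k * ((x + d) ^ (p - k) - x ^ (p - k))" for k
  have e1: "(h + (x + d)) ^ p = (\<Sum>k\<le>p. of_nat (p choose k) * h ^ k * (x + d) ^ (p - k))"
    by (rule binomial_ring)
  have e2: "(h + x) ^ p = (\<Sum>k\<le>p. of_nat (p choose k) * h ^ k * x ^ (p - k))"
    by (rule binomial_ring)
  have "(h + (x + d)) ^ p - (h + x) ^ p = (\<Sum>k\<le>p. g k)"
    unfolding e1 e2 g_def by (simp add: sum_subtractf[symmetric] algebra_simps)
  moreover have split: "{..p} = insert 0 {1..p}" by auto
  moreover have "g 0 = (x + d) ^ p - x ^ p" unfolding g_def by simp
  ultimately have eq: "(x + d + h) ^ p - (x + d) ^ p - (x + h) ^ p + x ^ p = (\<Sum>k\<in>{1..p}. g k)"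
    by (simp add: sum.insert algebra_simps)
  have "int p * d * h dvd g k" if "k \<in> {1..p}" for k
  proof (cases "k = p")
    case True then show ?thesis unfolding g_def by simp
  next
    case False
    have "p dvd p choose k" using that p2 assms False by (intro dvd_choose_prime) auto
    hence "int p dvd of_nat (p choose k)" by (simp add: int_dvd_int_iff)
    moreover have "h dvd h ^ k" using that by auto
    moreover have "d dvd (x + d) ^ (p - k) - x ^ (p - k)" using diff_pow_dvd[of "x+d" x "p-k"] by simp
    ultimately have "int p * h * d dvd g k" unfolding g_def by (intro mult_dvd_mono) auto
    then show ?thesis by (simp add: ac_simps)
  qed
  then show ?thesis unfolding eq by (rule dvd_sum)
qed

lemma fermat_int:
  fixes y :: int
  assumes "prime q" "\<not> int q dvd y"
  shows "[y ^ (q - 1) = 1] (mod int q)"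
proof -
  define z where "z = nat (y mod int q)"
  have q0: "q > 0" using assms prime_gt_0_nat by blast
  have zy: "int z = y mod int q" unfolding z_def using q0 by simp
  hence c: "[int z = y] (mod int q)" by (simp add: cong_def)
  have "\<not> q dvd z"
  proof
    assume "q dvd z"
    hence "int q dvd int z" by simp
    hence "int q dvd y" using c by (metis cong_dvd_iff)
    with assms show False by simp
  qed
  hence "[z ^ (q - 1) = 1] (mod q)" using assms by (intro fermat_theorem) auto
  hence "[int z ^ (q - 1) = 1] (mod int q)" by (metis cong_int_iff of_nat_1 of_nat_power)
  moreover have "[int z ^ (q - 1) = y ^ (q - 1)] (mod int q)" using c by (rule cong_pow)
  ultimately show ?thesis by (meson cong_sym cong_trans)
qed

lemma pow_p_cong:
  fixes y :: int
  assumes "prime q" "(q - 1) dvd (p - 1)" "p \<ge> 1"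
  shows "[y ^ p = y] (mod int q)"
proof (cases "int q dvd y")
  case True
  have "y dvd y ^ p" using assms(3) by (intro dvd_power) auto
  with True have "int q dvd y ^ p" by (rule dvd_trans)
  with True show ?thesis by (simp add: cong_def dvd_eq_mod_eq_0)
next
  case False
  obtain k where k: "p - 1 = (q - 1) * k" using assms(2) by blast
  have "y ^ p = y * (y ^ (q - 1)) ^ k" using assms(3) k
    by (metis power_mult power_Suc Suc_diff_1 less_le_trans zero_less_one)
  moreover have "[y * (y ^ (q - 1)) ^ k = y * 1 ^ k] (mod int q)"
    using fermat_int[OF assms(1) False] by (intro cong_mult cong_pow) auto
  ultimately show ?thesis by simp
qed

lemma sum_shift_periodic:
  fixes T :: "nat \<Rightarrow> complex"
  assumes per: "\<And>k. T (k + N) = T k"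
  shows "(\<Sum>k<N. T (k + h)) = (\<Sum>k<N. T k)"
proof (induction h)
  case 0 then show ?case by simp
next
  case (Suc h)
  have "(\<Sum>k<Suc N. T (k + h)) = T (0 + h) + (\<Sum>k<N. T (Suc k + h))"
    by (rule sum.lessThan_Suc_shift)
  moreover have "(\<Sum>k<Suc N. T (k + h)) = (\<Sum>k<N. T (k + h)) + T (N + h)"
    by simp
  moreover have "T (N + h) = T (0 + h)" using per[of h] by (simp add: add.commute)
  ultimately have "(\<Sum>k<N. T (Suc k + h)) = (\<Sum>k<N. T (k + h))" by simp
  then show ?case using Suc by simp
qed

lemma vanish:
  fixes T :: "nat \<Rightarrow> complex"
  assumes per: "\<And>k. T (k + N) = T k"
    and sh: "\<And>k. T (k + h) = T k * w" and w: "w \<noteq> 1"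
  shows "(\<Sum>k<N. T k) = 0"
proof -
  have "(\<Sum>k<N. T k) = (\<Sum>k<N. T (k + h))" using sum_shift_periodic[of T N h] per by simp
  also have "\<dots> = (\<Sum>k<N. T k) * w" by (simp add: sh sum_distrib_right)
  finally have "(\<Sum>k<N. T k) * (1 - w) = 0" by (simp add: algebra_simps)
  with w show ?thesis by simp
qed

lemma prod_primes_dvd:
  fixes s :: int
  assumes "finite Q" "\<forall>q\<in>Q. prime q" "\<forall>q\<in>Q. int q dvd s"
  shows "int (\<Prod>Q) dvd s"
  using assms
proof (induction Q rule: finite_induct)
  case empty then show ?case by simp
next
  case (insert q F)
  have "\<not> q dvd \<Prod>F"
  proof
    assume "q dvd \<Prod>F"
    then obtain q' where "q' \<in> F" "q dvd q'"
      using prime_dvd_prod_iff[of F q "\<lambda>x. x"] insert by auto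
    then have "q = q'" using insert by (metis insertCI primes_dvd_imp_eq)
    with insert \<open>q' \<in> F\<close> show False by simp
  qed
  then have "coprime q (\<Prod>F)" using insert by (simp add: prime_imp_coprime)
  then have "coprime (int q) (int (\<Prod>F))" by (simp only: coprime_int_iff)
  moreover have "int q dvd s" "int (\<Prod>F) dvd s" using insert by auto
  ultimately have "int q * int (\<Prod>F) dvd s" by (metis divides_mult)
  then show ?case using insert by simp
qed


locale zcs =
  fixes p n :: nat and Q :: "nat set" and a b u l :: int and N :: nat
  assumes pp: "prime p" and p3: "p \<ge> 3" and n2: "n \<ge> 2" and finQ: "finite Q"
    and Qp: "\<forall>q\<in>Q. prime q \<and> q \<noteq> p \<and> (q - 1) dvd (p - 1)"
    and Ndef: "N = p ^ n * (\<Prod>Q)"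
    and a0: "\<not> [a = 0] (mod int p)" and a1: "\<not> [a = -1] (mod int p)"
    and aq: "\<forall>q\<in>Q. \<not> [a = -1] (mod int q)"
    and cop: "coprime u (int N)"
begin

definition "M = \<Prod>Q"
definition P :: "int \<Rightarrow> int" where "P x = x ^ p + a * x + b"
definition "cc = int (N mod 2) + 2 * l"
definition G :: "int \<Rightarrow> int" where "G x = x ^ 2 + cc * x"
definition E :: "int \<Rightarrow> complex" where "E X = cis (pi * of_int X / real N)"
definition Zi :: "int \<Rightarrow> complex" where "Zi x = E (- (u * G x))"

lemma M_pos: "M > 0"
  unfolding M_def using finQ Qp by (auto intro!: prod_pos simp: prime_gt_0_nat)

lemma N_eq: "N = p ^ n * M" unfolding M_def Ndef ..

lemma p_pos: "p > 0" using pp prime_gt_0_nat by blast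

lemma N_pos: "N > 0" unfolding N_eq using M_pos p_pos by simp

lemma Ni_eq: "int N = int p ^ n * int M" unfolding N_eq by simp

lemma p_not_dvd_M: "\<not> p dvd M"
proof
  assume "p dvd M"
  then obtain q where "q \<in> Q" "p dvd q"
    using prime_dvd_prod_iff[of Q p "\<lambda>x. x"] finQ pp unfolding M_def by auto
  then show False using Qp pp by (metis primes_dvd_imp_eq)
qed

lemma cop_pM: "coprime (int p) (int M)"
  using p_not_dvd_M pp by (simp add: prime_imp_coprime)

lemma cop_pnM: "coprime (int p ^ k) (int M)"
  using cop_pM by (simp add: coprime_power_left_iff)

lemma q_dvd_M: "q \<in> Q \<Longrightarrow> int q dvd int M"
  unfolding M_def using finQ by (simp add: dvd_prod_eqI)

lemma q_dvd_N: "q \<in> Q \<Longrightarrow> int q dvd int N"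
  using q_dvd_M Ni_eq by (metis dvd_mult2 mult.commute)

lemma p_dvd_N: "int p dvd int N"
  using n2 Ni_eq by (simp add: dvd_power_le)

lemma pj_dvd_N: "j \<le> n \<Longrightarrow> int p ^ j dvd int N"
  using Ni_eq by (simp add: le_imp_power_dvd)

lemma p_not_dvd_a: "\<not> int p dvd a" using a0 by (simp add: cong_0_iff)
lemma p_not_dvd_a1: "\<not> int p dvd a + 1" using a1 by (simp add: cong_iff_dvd_diff)
lemma q_not_dvd_a1: "q \<in> Q \<Longrightarrow> \<not> int q dvd a + 1" using aq by (simp add: cong_iff_dvd_diff)

lemma p_not_dvd_u: "\<not> int p dvd u"
proof
  assume "int p dvd u"
  then have "int p dvd gcd u (int N)" using p_dvd_N by simp
  with cop pp show False by (simp add: coprime_iff_gcd_eq_1)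
qed

lemma q_not_dvd_u: "q \<in> Q \<Longrightarrow> \<not> int q dvd u"
proof
  assume "q \<in> Q" "int q dvd u"
  then have "int q dvd gcd u (int N)" using q_dvd_N by simp
  with cop Qp \<open>q \<in> Q\<close> show False by (auto simp add: coprime_iff_gcd_eq_1)
qed

lemma M_dvd: "(\<forall>q\<in>Q. int q dvd s) \<Longrightarrow> int M dvd s"
  unfolding M_def using prod_primes_dvd[of Q s] finQ Qp by auto


lemma P_cong: "[x = y] (mod m) \<Longrightarrow> [P x = P y] (mod m)"
  unfolding P_def by (intro cong_add cong_mult cong_pow cong_refl)

lemma pow_q: "q \<in> Q \<Longrightarrow> [(y::int) ^ p = y] (mod int q)"
  using Qp p_pos by (intro pow_p_cong) auto

lemma pow_2: "[(y::int) ^ p = y] (mod 2)"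
  using pow_p_cong[of 2 p y] p_pos by simp

lemma P_q: "q \<in> Q \<Longrightarrow> [P y = (1 + a) * y + b] (mod int q)"
proof -
  assume "q \<in> Q"
  then have "[y ^ p + a * y + b = y + a * y + b] (mod int q)"
    using pow_q by (intro cong_add cong_refl) auto
  then show ?thesis unfolding P_def by (simp add: algebra_simps)
qed

definition W :: "int \<Rightarrow> int \<Rightarrow> int \<Rightarrow> int" where
  "W x s h = (x + s + h) ^ p - (x + s) ^ p - (x + h) ^ p + x ^ p"

lemma W_P: "P (x + s + h) - P (x + s) - P (x + h) + P x = W x s h"
  unfolding P_def W_def by (simp add: algebra_simps)

lemma W_dvd: "int p * s * h dvd W x s h"
  unfolding W_def using second_diff_dvd[OF pp] by blast

lemma W_q: assumes "q \<in> Q" shows "int q dvd W x s h"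
proof -
  have "[W x s h = (x + s + h) - (x + s) - (x + h) + x] (mod int q)"
    unfolding W_def using pow_q[OF assms] by (intro cong_add cong_diff) auto
  then show ?thesis by (simp add: cong_0_iff)
qed

lemma W_2: "2 dvd W x s h"
proof -
  have "[W x s h = (x + s + h) - (x + s) - (x + h) + x] (mod 2)"
    unfolding W_def using pow_2 by (intro cong_add cong_diff) auto
  then show ?thesis by (simp add: cong_0_iff)
qed

lemma gamma: "\<exists>t. P (y + s) - P y = s * (a + s ^ (p - 1) + int p * t)"
proof -
  obtain t where t: "(y + s) ^ p - y ^ p - s ^ p = int p * s * t"
    using binom_dvd[OF pp, of s y] by (auto simp: dvd_def)
  have sp: "s ^ p = s * s ^ (p - 1)" using p_pos by (metis Suc_diff_1 power_Suc)
  have "P (y + s) - P y = (y + s) ^ p - y ^ p + a * s" unfolding P_def by (simp add: algebra_simps)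
  also have "\<dots> = s * (a + s ^ (p - 1) + int p * t)" using t sp by (simp add: algebra_simps)
  finally show ?thesis by blast
qed

lemma gam_mod: "[a + s ^ (p - 1) + int p * t = a + (if int p dvd s then 0 else 1)] (mod int p)"
proof (cases "int p dvd s")
  case True
  have "s dvd s ^ (p - 1)" using p3 by (intro dvd_power) auto
  with True have "int p dvd s ^ (p - 1)" by (rule dvd_trans)
  then have "[s ^ (p - 1) = 0] (mod int p)" by (simp add: cong_0_iff)
  moreover have "[int p * t = 0] (mod int p)" by (simp add: cong_0_iff)
  ultimately have "[a + s ^ (p - 1) + int p * t = a + 0 + 0] (mod int p)"
    by (intro cong_add cong_refl)
  with True show ?thesis by simp
next
  case False
  have "[s ^ (p - 1) = 1] (mod int p)" using fermat_int[OF pp False] .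
  moreover have "[int p * t = 0] (mod int p)" by (simp add: cong_0_iff)
  ultimately have "[a + s ^ (p - 1) + int p * t = a + 1 + 0] (mod int p)"
    by (intro cong_add cong_refl)
  with False show ?thesis by simp
qed

lemma gam_unit: "\<not> int p dvd (a + s ^ (p - 1) + int p * t)"
proof
  assume h: "int p dvd (a + s ^ (p - 1) + int p * t)"
  have "int p dvd a + (if int p dvd s then 0 else 1)"
    using gam_mod[of s t] h by (metis cong_dvd_iff)
  then show False using p_not_dvd_a p_not_dvd_a1 by (auto split: if_splits)
qed

lemma pj_dvd_gamma:
  assumes "int p ^ j dvd s * (a + z ^ (p - 1) + int p * t)"
  shows "int p ^ j dvd s"
proof -
  have "coprime (int p) (a + z ^ (p - 1) + int p * t)"
    using gam_unit pp by (simp add: prime_imp_coprime)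
  then have "coprime (int p ^ j) (a + z ^ (p - 1) + int p * t)"
    by (simp add: coprime_power_left_iff)
  with assms show ?thesis by (simp add: coprime_dvd_mult_left_iff)
qed


lemma E_add: "E X * E Y = E (X + Y)"
  unfolding E_def by (simp add: cis_mult add_divide_distrib algebra_simps)

lemma E_cnj: "cnj (E X) = E (- X)"
  unfolding E_def by (simp add: cis_cnj)

lemma E_norm: "cmod (E X) = 1"
  unfolding E_def by simp

lemma E_shift: "E (X + 2 * int N * t) = E X"
proof -
  have "pi * of_int (X + 2 * int N * t) / real N = pi * of_int X / real N + 2 * pi * of_int t"
    using N_pos by (simp add: field_simps)
  then have "E (X + 2 * int N * t) = E X * cis (2 * pi * of_int t)"
    by (simp only: E_def cis_mult)
  also have "cis (2 * pi * of_int t) = 1" by (rule cis_multiple_2pi) simp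
  finally show ?thesis by simp
qed

lemma E_cong: "[X = Y] (mod 2 * int N) \<Longrightarrow> E X = E Y"
  by (metis E_shift cong_iff_lin mult.assoc)

lemma E_one: assumes "E X = 1" shows "2 * int N dvd X"
proof -
  have "Re (E X) = 1" using assms by simp
  then have "cos (pi * of_int X / real N) = 1" unfolding E_def by simp
  then obtain k :: int where k: "pi * of_int X / real N = of_int k * 2 * pi"
    using cos_one_2pi_int by blast
  then have "of_int X = real N * (of_int k * 2)" using N_pos by (simp add: field_simps)
  then have "real_of_int X = real_of_int (int N * (k * 2))" by simp
  then have "X = int N * (k * 2)" by (simp only: of_int_eq_iff)
  then show ?thesis by (simp add: ac_simps)
qed

lemma Zi_cong: assumes "[x = y] (mod int N)" shows "Zi x = Zi y"
proof -
  obtain t where t: "y = x + int N * t" using assms cong_iff_lin by blast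
  have ev: "even (t * (int N * t + cc))"
  proof (cases "even N")
    case True
    then have "N mod 2 = 0" by simp
    then have "cc = 2 * l" unfolding cc_def by simp
    moreover have "even (int N * t)" using True by simp
    ultimately show ?thesis by simp
  next
    case False
    then have "N mod 2 = 1" by presburger
    then have c1: "cc = 1 + 2 * l" unfolding cc_def by simp
    show ?thesis
    proof (cases "even t")
      case True then show ?thesis by simp
    next
      case False
      then have "odd (int N * t)" using \<open>\<not> even N\<close> by simp
      then have "even (int N * t + 1 + 2 * l)" by simp
      then show ?thesis unfolding c1 by (simp add: add.assoc)
    qed
  qed
  then obtain r where r: "t * (int N * t + cc) = 2 * r" by blast
  have "u * G y = u * G x + u * int N * (2 * x * t + t * (int N * t + cc))"
    unfolding G_def t power2_eq_square by (simp add: algebra_simps)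
  also have "\<dots> = u * G x + 2 * int N * (u * (x * t + r))" unfolding r by (simp add: algebra_simps)
  finally have "- (u * G x) = - (u * G y) + 2 * int N * (u * (x * t + r))" by simp
  then show ?thesis by (simp only: Zi_def E_shift)
qed

lemma Zi_cnj: "Zi x * cnj (Zi y) = E (u * (G y - G x))"
  unfolding Zi_def by (simp add: E_cnj E_add algebra_simps)

lemma Zi_norm: "cmod (Zi x) = 1" unfolding Zi_def by (rule E_norm)

lemma zc_Zi: "zc_seq N u l k = Zi (int k)"
proof -
  have "u * (int k ^ 2 + int (N mod 2) * int k + 2 * l * int k) = u * G (int k)"
    unfolding G_def cc_def by (simp add: algebra_simps)
  then have "- pi * real_of_int (u * (int k ^ 2 + int (N mod 2) * int k + 2 * l * int k)) / real N
      = pi * real_of_int (- (u * G (int k))) / real N" by (simp only: of_int_minus)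
  then show ?thesis unfolding zc_seq_def Zi_def E_def by (simp only:)
qed

lemma zc_per: "zc_seq N u l (k + N) = zc_seq N u l k"
  unfolding zc_Zi by (intro Zi_cong) (simp add: cong_def)

lemma zc_mod: "zc_seq N u l (k mod N) = zc_seq N u l k"
  unfolding zc_Zi by (intro Zi_cong) (simp add: cong_def zmod_int)

lemma pp_int: "int (pp_map N p a b k) = P (int k) mod int N"
  unfolding pp_map_def P_def using N_pos by simp

lemma pp_lt: "pp_map N p a b k < N"
proof -
  have "P (int k) mod int N < int N" using N_pos by simp
  then show ?thesis using pp_int[of k] by simp
qed

lemma pp_cong: "[int (pp_map N p a b k) = P (int k)] (mod int N)"
  unfolding pp_int by (simp add: cong_def)

lemma P_inj_mod:
  assumes "[P (y + s) = P y] (mod int N)"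
  shows "int N dvd s"
proof -
  obtain t where t: "P (y + s) - P y = s * (a + s ^ (p - 1) + int p * t)" using gamma by blast
  have dN: "int N dvd P (y + s) - P y" using assms by (simp add: cong_iff_dvd_diff)
  have "int p ^ n dvd s"
  proof (rule pj_dvd_gamma)
    show "int p ^ n dvd s * (a + s ^ (p - 1) + int p * t)"
      using dN t Ni_eq by (metis dvd_mult_left)
  qed
  moreover have "int M dvd s"
  proof (rule M_dvd, intro ballI)
    fix q assume q: "q \<in> Q"
    have "[P (y + s) = (1 + a) * (y + s) + b] (mod int q)" "[P y = (1 + a) * y + b] (mod int q)"
      using P_q[OF q] by auto
    moreover have "int q dvd P (y + s) - P y" using dN q_dvd_N[OF q] by (rule dvd_trans[rotated])
    ultimately have "int q dvd ((1 + a) * (y + s) + b) - ((1 + a) * y + b)"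
      by (metis cong_dvd_iff cong_diff cong_sym)
    then have "int q dvd (a + 1) * s" by (simp add: algebra_simps)
    moreover have "prime (int q)" using Qp q by auto
    ultimately show "int q dvd s" using q_not_dvd_a1[OF q] by (simp add: prime_dvd_mult_iff)
  qed
  ultimately have "int p ^ n * int M dvd s" using cop_pnM by (metis divides_mult)
  then show ?thesis using Ni_eq by simp
qed

lemma pp_inj: "inj_on (pp_map N p a b) {..<N}"
proof (rule inj_onI)
  fix x y assume x: "x \<in> {..<N}" and y: "y \<in> {..<N}" and e: "pp_map N p a b x = pp_map N p a b y"
  have "[P (int x) = P (int y)] (mod int N)"
    using pp_cong[of x] pp_cong[of y] e by (metis cong_sym cong_trans)
  then have "[P (int x + (int y - int x)) = P (int x)] (mod int N)" by (simp add: cong_sym)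
  then have "int N dvd int y - int x" by (rule P_inj_mod)
  then obtain k where k: "int y - int x = int N * k" by (auto simp: dvd_def)
  have "k = 0"
  proof (rule ccontr)
    assume "k \<noteq> 0"
    then have "int N * 1 \<le> int N * \<bar>k\<bar>" by (intro mult_left_mono) auto
    then have "int N \<le> \<bar>int y - int x\<bar>" unfolding k by (simp add: abs_mult)
    with x y show False by auto
  qed
  with k show "x = y" by simp
qed

lemma pp_bij: "bij_betw (pp_map N p a b) {..<N} {..<N}"
proof -
  have "pp_map N p a b ` {..<N} \<subseteq> {..<N}" using pp_lt by auto
  then show ?thesis unfolding bij_betw_def using endo_inj_surj[OF finite_lessThan _ pp_inj] pp_inj by auto
qed


lemma pp_per: "pp_map N p a b (k + N) = pp_map N p a b k"
proof -
  have "[P (int (k + N)) = P (int k)] (mod int N)" by (intro P_cong) (simp add: cong_def)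
  then have "int (pp_map N p a b (k + N)) = int (pp_map N p a b k)"
    unfolding pp_int by (simp add: cong_def)
  then show ?thesis by simp
qed

lemma G_alg: "G D' - G C - (G B - G A) = (D' - B - C + A) * ((D' - B) + (C - A) + 2 * A + cc) + 2 * (D' - B) * (B - A)"
  unfolding G_def power2_eq_square by (simp add: algebra_simps)

lemma W_ev:
  assumes "int N dvd Wv" "2 dvd Wv"
  shows "2 * int N dvd Wv * (Wv + 2 * U' + 2 * A + cc)"
proof (cases "even N")
  case True
  then have "N mod 2 = 0" by simp
  then have "cc = 2 * l" unfolding cc_def by simp
  then have "2 dvd Wv + 2 * U' + 2 * A + cc" using assms(2) by simp
  with assms(1) have "int N * 2 dvd Wv * (Wv + 2 * U' + 2 * A + cc)" by (rule mult_dvd_mono)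
  then show ?thesis by (simp add: ac_simps)
next
  case False
  then have "coprime 2 (int N)" by simp
  then have "2 * int N dvd Wv" using assms by (metis divides_mult)
  then show ?thesis by simp
qed

lemma gam_props:
  assumes "s \<noteq> 0"
  shows "P (y + s) - P y = s * ((P (y + s) - P y) div s)"
    and "[(P (y + s) - P y) div s = a + (if int p dvd s then 0 else 1)] (mod int p)"
    and "\<not> int p dvd ((P (y + s) - P y) div s)"
proof -
  obtain t where t: "P (y + s) - P y = s * (a + s ^ (p - 1) + int p * t)" using gamma by blast
  then have g: "(P (y + s) - P y) div s = a + s ^ (p - 1) + int p * t" using assms by simp
  show "P (y + s) - P y = s * ((P (y + s) - P y) div s)" unfolding g by (rule t)
  show "[(P (y + s) - P y) div s = a + (if int p dvd s then 0 else 1)] (mod int p)"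
    unfolding g by (rule gam_mod)
  show "\<not> int p dvd ((P (y + s) - P y) div s)" unfolding g by (rule gam_unit)
qed

lemma dvd_sub1: "(m::int) dvd x - y \<Longrightarrow> m dvd y \<Longrightarrow> m dvd x"
  using dvd_add[of m "x - y" y] by simp

lemma dvd_sub2: "(m::int) dvd x - y \<Longrightarrow> m dvd x \<Longrightarrow> m dvd y"
  using dvd_diff[of m x "x - y"] by simp

lemma pj_cancel:
  assumes "\<not> int p dvd g" "int p ^ j dvd s * g"
  shows "int p ^ j dvd s"
proof -
  have "coprime (int p) g" using assms(1) pp by (simp add: prime_imp_coprime)
  then have "coprime (int p ^ j) g" by (simp add: coprime_power_left_iff)
  with assms(2) show ?thesis by (simp add: coprime_dvd_mult_left_iff)
qed

context
  fixes d :: nat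
  assumes dpos: "0 < d" and dlt: "d < N"
begin

definition "Dd = int d"

definition T1 :: "nat \<Rightarrow> complex" where
  "T1 k = Zi (P (int k)) * cnj (Zi (P (int k + Dd)))"

lemma auto_i:
  "autocorr N (interleave (zc_seq N u l) (pp_map N p a b)) d = (\<Sum>k<N. T1 k)"
proof -
  have y: "interleave (zc_seq N u l) (pp_map N p a b) k = Zi (P (int k))" for k
    unfolding interleave_def zc_Zi by (rule Zi_cong) (rule pp_cong)
  have "[int ((k + d) mod N) = int k + Dd] (mod int N)" for k
    unfolding Dd_def by (simp add: cong_def zmod_int)
  then have "[P (int ((k + d) mod N)) = P (int k + Dd)] (mod int N)" for k
    by (rule P_cong)
  then have "Zi (P (int ((k + d) mod N))) = Zi (P (int k + Dd))" for k
    by (rule Zi_cong)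
  then show ?thesis unfolding autocorr_def T1_def y by simp
qed

lemma shift_i:
  fixes h :: nat
  defines "H \<equiv> int h"
  defines "VB \<equiv> \<lambda>x. (P (x + Dd + H) - P (x + Dd)) * (P (x + Dd) - P x)"
  assumes hW: "\<And>x. int N dvd W x Dd H"
    and hV: "\<And>x. int N dvd u * (VB x - VB 0)"
    and h0: "\<not> int N dvd u * VB 0"
  shows "(\<Sum>k<N. T1 k) = 0"
proof (rule vanish)
  show "T1 (k + N) = T1 k" for k
  proof -
    have "[P (int (k + N)) = P (int k)] (mod int N)" by (intro P_cong) (simp add: cong_def)
    moreover have "[P (int (k + N) + Dd) = P (int k + Dd)] (mod int N)" by (intro P_cong) (simp add: cong_iff_dvd_diff)
    ultimately show ?thesis unfolding T1_def using Zi_cong by metis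
  qed
  show "T1 (k + h) = T1 k * E (2 * u * VB 0)" for k
  proof -
    define x where "x = int k"
    have ik: "int (k + h) = x + H" unfolding x_def H_def by simp
    have e1: "T1 (k + h) = E (u * (G (P (x + Dd + H)) - G (P (x + H))))"
      unfolding T1_def ik Zi_cnj by (simp add: ac_simps)
    have e2: "T1 k * E (2 * u * VB 0) = E (u * (G (P (x + Dd)) - G (P x)) + 2 * u * VB 0)"
      unfolding T1_def x_def[symmetric] Zi_cnj E_add ..
    have alg: "G (P (x + Dd + H)) - G (P (x + H)) - (G (P (x + Dd)) - G (P x))
      = W x Dd H * (W x Dd H + 2 * (P (x + H) - P x) + 2 * P x + cc) + 2 * VB x"
      unfolding G_alg W_P[symmetric] VB_def by (simp add: algebra_simps)
    have d1: "2 * int N dvd W x Dd H * (W x Dd H + 2 * (P (x + H) - P x) + 2 * P x + cc)"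
      by (intro W_ev hW W_2)
    have d2: "2 * int N dvd 2 * u * (VB x - VB 0)" using hV[of x] by (simp add: mult.assoc)
    have "2 * int N dvd u * (G (P (x + Dd + H)) - G (P (x + H))) - (u * (G (P (x + Dd)) - G (P x)) + 2 * u * VB 0)"
    proof -
      have "u * (G (P (x + Dd + H)) - G (P (x + H))) - (u * (G (P (x + Dd)) - G (P x)) + 2 * u * VB 0)
        = u * (G (P (x + Dd + H)) - G (P (x + H)) - (G (P (x + Dd)) - G (P x))) - 2 * u * VB 0"
        by (simp add: algebra_simps)
      also have "\<dots> = u * (W x Dd H * (W x Dd H + 2 * (P (x + H) - P x) + 2 * P x + cc)) + 2 * u * (VB x - VB 0)"
        unfolding alg by (simp add: algebra_simps)
      also have "2 * int N dvd \<dots>" by (intro dvd_add dvd_mult d1 d2)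
      finally show ?thesis .
    qed
    then have "E (u * (G (P (x + Dd + H)) - G (P (x + H)))) = E (u * (G (P (x + Dd)) - G (P x)) + 2 * u * VB 0)"
      by (intro E_cong) (simp add: cong_iff_dvd_diff)
    then show ?thesis using e1 e2 by simp
  qed
  show "E (2 * u * VB 0) \<noteq> 1"
  proof
    assume "E (2 * u * VB 0) = 1"
    then have "2 * int N dvd 2 * u * VB 0" by (rule E_one)
    then have "int N dvd u * VB 0" by (simp add: mult.assoc)
    with h0 show False by simp
  qed
qed


definition "sig = perm_inv N (pp_map N p a b)"
definition "R x = sig ((pp_map N p a b x + d) mod N)"
definition "T2 x = zc_seq N u l x * cnj (zc_seq N u l (R x))"
definition "dl x = int (R x) - int x"

lemma sig_lt: "k < N \<Longrightarrow> sig k < N"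
  unfolding sig_def perm_inv_def using pp_bij
  by (metis bij_betw_def inv_into_into lessThan_iff)

lemma pp_sig: "k < N \<Longrightarrow> pp_map N p a b (sig k) = k"
  unfolding sig_def perm_inv_def using pp_bij
  by (metis bij_betw_def f_inv_into_f lessThan_iff)

lemma sig_pp: "x < N \<Longrightarrow> sig (pp_map N p a b x) = x"
  unfolding sig_def perm_inv_def using pp_inj by (simp add: inv_into_f_f)

lemma auto_ii:
  "autocorr N (interleave (zc_seq N u l) (perm_inv N (pp_map N p a b))) d = (\<Sum>x<N. T2 x)"
proof -
  define g where "g k = zc_seq N u l (sig k) * cnj (zc_seq N u l (sig ((k + d) mod N)))" for k
  have "autocorr N (interleave (zc_seq N u l) (perm_inv N (pp_map N p a b))) d = (\<Sum>k\<in>{..<N}. g k)"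
    unfolding autocorr_def interleave_def g_def sig_def ..
  also have "\<dots> = (\<Sum>x\<in>{..<N}. g (pp_map N p a b x))"
    using sum.reindex_bij_betw[OF pp_bij, of g] by simp
  also have "\<dots> = (\<Sum>x<N. T2 x)"
    by (intro sum.cong refl) (simp add: g_def T2_def R_def sig_pp)
  finally show ?thesis .
qed

lemma R_lt: "R x < N"
  unfolding R_def using N_pos by (intro sig_lt) simp

lemma R_cong: "[P (int (R x)) = P (int x) + Dd] (mod int N)"
proof -
  have e: "pp_map N p a b (R x) = (pp_map N p a b x + d) mod N"
    unfolding R_def using N_pos by (intro pp_sig) simp
  have "[P (int (R x)) = int (pp_map N p a b (R x))] (mod int N)" using pp_cong cong_sym by blast
  also have "[int (pp_map N p a b (R x)) = int (pp_map N p a b x) + Dd] (mod int N)"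
    unfolding e Dd_def by (simp add: cong_def zmod_int)
  also have "[int (pp_map N p a b x) + Dd = P (int x) + Dd] (mod int N)"
    using pp_cong by (intro cong_add cong_refl) auto
  finally show ?thesis .
qed

lemma R_uniq:
  assumes "z < N" "[P (int z) = P (int x) + Dd] (mod int N)"
  shows "z = R x"
proof -
  have "[P (int z) = P (int (R x))] (mod int N)" using assms(2) R_cong by (metis cong_sym cong_trans)
  then have "int (pp_map N p a b z) = int (pp_map N p a b (R x))" unfolding pp_int by (simp add: cong_def)
  then have "pp_map N p a b z = pp_map N p a b (R x)" by simp
  then show ?thesis using pp_inj assms(1) R_lt by (auto dest: inj_onD)
qed

lemma R_per: "R (x + N) = R x"
  unfolding R_def pp_per ..

lemma shift_ii:
  fixes h :: nat
  defines "H \<equiv> int h"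
  assumes hW: "\<And>x. int N dvd W (int x) (dl x) H"
    and hV: "\<And>x. int N dvd u * H * (dl x - dl 0)"
    and h0: "\<not> int N dvd u * H * dl 0"
  shows "(\<Sum>x<N. T2 x) = 0"
proof (rule vanish)
  show "T2 (k + N) = T2 k" for k
    unfolding T2_def R_per zc_per ..
  show "T2 (k + h) = T2 k * E (2 * u * H * dl 0)" for k
  proof -
    define X where "X = int k"
    define r where "r = int (R k)"
    have rX: "r = X + dl k" unfolding r_def X_def dl_def by simp
    have Rs: "R (k + h) = (R k + h) mod N"
    proof (rule sym, rule R_uniq)
      show "(R k + h) mod N < N" using N_pos by simp
      have c1: "[P (int ((R k + h) mod N)) = P (r + H)] (mod int N)"
        unfolding r_def H_def by (intro P_cong) (simp add: cong_def zmod_int)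
      have eq: "P (r + H) - (P (X + H) + Dd) = W X (dl k) H + (P r - P X - Dd)"
        using W_P[of X "dl k" H] unfolding rX by (simp add: algebra_simps)
      have d1: "int N dvd P r - P X - Dd"
        using R_cong[of k] unfolding r_def X_def by (simp add: cong_iff_dvd_diff algebra_simps)
      have d2: "int N dvd W X (dl k) H" using hW[of k] unfolding X_def .
      have "int N dvd P (r + H) - (P (X + H) + Dd)"
        unfolding eq using d1 d2 by (rule dvd_add[rotated])
      then have "[P (r + H) = P (X + H) + Dd] (mod int N)" by (simp add: cong_iff_dvd_diff)
      with c1 have "[P (int ((R k + h) mod N)) = P (X + H) + Dd] (mod int N)" by (rule cong_trans)
      then show "[P (int ((R k + h) mod N)) = P (int (k + h)) + Dd] (mod int N)"
        unfolding X_def H_def by simp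
    qed
    have "T2 (k + h) = Zi (X + H) * cnj (Zi (r + H))"
      unfolding T2_def Rs zc_mod unfolding zc_Zi X_def r_def H_def by simp
    also have "\<dots> = E (u * (G (r + H) - G (X + H)))" by (rule Zi_cnj)
    also have "u * (G (r + H) - G (X + H)) = u * (G r - G X) + 2 * u * H * dl k"
      unfolding G_def rX power2_eq_square by (simp add: algebra_simps)
    also have "E (u * (G r - G X) + 2 * u * H * dl k) = E (u * (G r - G X) + 2 * u * H * dl 0)"
    proof (rule E_cong)
      have "2 * int N dvd 2 * (u * H * (dl k - dl 0))" using hV[of k] by simp
      then show "[u * (G r - G X) + 2 * u * H * dl k = u * (G r - G X) + 2 * u * H * dl 0] (mod 2 * int N)"
        by (simp add: cong_iff_dvd_diff algebra_simps)
    qed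
    also have "\<dots> = T2 k * E (2 * u * H * dl 0)"
      unfolding T2_def zc_Zi X_def r_def Zi_cnj E_add ..
    finally show ?thesis .
  qed
  show "E (2 * u * H * dl 0) \<noteq> 1"
  proof
    assume "E (2 * u * H * dl 0) = 1"
    then have "2 * int N dvd 2 * u * H * dl 0" by (rule E_one)
    then have "int N dvd u * H * dl 0" by (simp add: mult.assoc)
    with h0 show False by simp
  qed
qed


lemma lin_q: assumes "q \<in> Q" shows "int q dvd (P (y + s) - P y) - (1 + a) * s"
proof -
  have "[P (y + s) - P y = ((1 + a) * (y + s) + b) - ((1 + a) * y + b)] (mod int q)"
    using P_q[OF assms] by (intro cong_diff) auto
  then show ?thesis by (simp add: cong_iff_dvd_diff algebra_simps)
qed

lemma Rd: "[P (int x + dl x) = P (int x) + Dd] (mod int N)"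
  using R_cong unfolding dl_def by simp

lemma case_b:
  assumes q: "q \<in> Q" and nd: "\<not> q dvd d"
  shows "(\<Sum>k<N. T1 k) = 0 \<and> (\<Sum>x<N. T2 x) = 0"
proof -
  define h where "h = N div q"
  define H where "H = int h"
  have qN: "q dvd N" using q_dvd_N[OF q] by simp
  have "N = h * q" unfolding h_def using qN by simp
  then have Nhq: "int N = H * int q" unfolding H_def by simp
  have qprime: "prime (int q)" using Qp q by simp
  have Hpos: "H \<noteq> 0" using Nhq N_pos by auto
  have qnH: "\<not> int q dvd H"
  proof
    assume qH: "int q dvd H"
    have "M = q * \<Prod>(Q - {q})" unfolding M_def using finQ q by (simp add: prod.remove)
    then have "N = q * (p ^ n * \<Prod>(Q - {q}))" using N_eq by simp
    then have "h = p ^ n * \<Prod>(Q - {q})" unfolding h_def using Qp q prime_gt_0_nat by auto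
    moreover have "q dvd h" using qH unfolding H_def by (simp only: int_dvd_int_iff)
    ultimately have "q dvd p ^ n * \<Prod>(Q - {q})" by simp
    then have "q dvd p ^ n \<or> q dvd \<Prod>(Q - {q})" using Qp q by (simp add: prime_dvd_mult_iff)
    then show False
    proof
      assume "q dvd p ^ n"
      then have "q dvd p" using Qp q prime_dvd_power by blast
      then show False using Qp q pp by (metis primes_dvd_imp_eq)
    next
      assume "q dvd \<Prod>(Q - {q})"
      then obtain q' where "q' \<in> Q - {q}" "q dvd q'"
        using prime_dvd_prod_iff[of "Q - {q}" q "\<lambda>x. x"] finQ Qp q by auto
      then show False using Qp q by (metis DiffD1 DiffD2 primes_dvd_imp_eq singletonI)
    qed
  qed
  have copHq: "coprime H (int q)" using prime_imp_coprime[OF qprime qnH]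
    by (simp add: coprime_commute)
  have hW: "int N dvd W x s H" for x s
  proof -
    have "H dvd int p * s * H" by simp
    then have "H dvd W x s H" using W_dvd[of s H x] by (rule dvd_trans)
    moreover have "int q dvd W x s H" using W_q[OF q] .
    ultimately show ?thesis unfolding Nhq using copHq by (metis divides_mult)
  qed
  have qnD: "\<not> int q dvd Dd" using nd unfolding Dd_def by simp
  have qna: "\<not> int q dvd 1 + a" using q_not_dvd_a1[OF q] by (simp add: add.commute)
  have qnu: "\<not> int q dvd u" using q_not_dvd_u[OF q] .
  define BA where "BA x = P (x + Dd) - P x" for x
  define Ga where "Ga x = (P (x + Dd + H) - P (x + Dd)) div H" for x
  have VG: "P (x + Dd + H) - P (x + Dd) = H * Ga x" for x
  proof -
    obtain t where "P (x + Dd + H) - P (x + Dd) = H * (a + H ^ (p - 1) + int p * t)"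
      using gamma[of "x + Dd" H] by auto
    then show ?thesis unfolding Ga_def using Hpos by simp
  qed
  have Gq: "int q dvd Ga x - (1 + a)" for x
  proof -
    have "int q dvd H * Ga x - (1 + a) * H" using lin_q[OF q, of "x + Dd" H] VG[of x] by (simp add: add.assoc)
    then have "int q dvd H * (Ga x - (1 + a))" by (simp add: algebra_simps)
    then show ?thesis using qprime qnH by (simp add: prime_dvd_mult_iff)
  qed
  have Bq: "int q dvd BA x - (1 + a) * Dd" for x
    unfolding BA_def using lin_q[OF q, of x Dd] .
  have Zq: "[Ga x * BA x = (1 + a) * ((1 + a) * Dd)] (mod int q)" for x
    using Gq[of x] Bq[of x] by (intro cong_mult) (simp_all add: cong_iff_dvd_diff)
  have VB: "(P (x + Dd + H) - P (x + Dd)) * (P (x + Dd) - P x) = H * (Ga x * BA x)" for x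
    using VG[of x] unfolding BA_def by simp
  have i1: "int N dvd u * ((P (x + Dd + H) - P (x + Dd)) * (P (x + Dd) - P x)
      - (P (0 + Dd + H) - P (0 + Dd)) * (P (0 + Dd) - P 0))" for x
  proof -
    have "[Ga x * BA x = Ga 0 * BA 0] (mod int q)" using Zq[of x] Zq[of 0] by (metis cong_sym cong_trans)
    then have "int q dvd Ga x * BA x - Ga 0 * BA 0" by (simp add: cong_iff_dvd_diff)
    then have "H * int q dvd H * (Ga x * BA x - Ga 0 * BA 0)" by simp
    then have "int N dvd H * (Ga x * BA x) - H * (Ga 0 * BA 0)" unfolding Nhq by (simp add: algebra_simps)
    then show ?thesis unfolding VB by simp
  qed
  have i2: "\<not> int N dvd u * ((P (0 + Dd + H) - P (0 + Dd)) * (P (0 + Dd) - P 0))"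
  proof
    assume "int N dvd u * ((P (0 + Dd + H) - P (0 + Dd)) * (P (0 + Dd) - P 0))"
    then have "H * int q dvd H * (u * (Ga 0 * BA 0))" unfolding VB Nhq by (simp add: ac_simps)
    then have "int q dvd u * (Ga 0 * BA 0)" using Hpos by simp
    then have "int q dvd Ga 0 * BA 0" using qnu qprime by (simp add: prime_dvd_mult_iff)
    moreover have "[Ga 0 * BA 0 = (1 + a) * ((1 + a) * Dd)] (mod int q)" by (rule Zq)
    ultimately have "int q dvd (1 + a) * ((1 + a) * Dd)" by (metis cong_dvd_iff)
    then show False using qna qnD qprime by (simp add: prime_dvd_mult_iff)
  qed
  have S1: "(\<Sum>k<N. T1 k) = 0"
    by (rule shift_i[of h]) (use hW i1 i2 in \<open>simp_all add: H_def\<close>)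
  have dq: "int q dvd (1 + a) * dl x - Dd" for x
  proof -
    have "int q dvd P (int x + dl x) - P (int x) - Dd"
      using Rd[of x] q_dvd_N[OF q] by (metis cong_iff_dvd_diff diff_diff_eq dvd_trans)
    moreover have "int q dvd (P (int x + dl x) - P (int x)) - (1 + a) * dl x" by (rule lin_q[OF q])
    ultimately have "int q dvd (P (int x + dl x) - P (int x) - Dd) - ((P (int x + dl x) - P (int x)) - (1 + a) * dl x)"
      by (rule dvd_diff)
    then show ?thesis by (simp add: algebra_simps)
  qed
  have ii1: "int N dvd u * H * (dl x - dl 0)" for x
  proof -
    have "int q dvd ((1 + a) * dl x - Dd) - ((1 + a) * dl 0 - Dd)" using dq[of x] dq[of 0] by (rule dvd_diff)
    then have "int q dvd (1 + a) * (dl x - dl 0)" by (simp add: algebra_simps)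
    then have "int q dvd dl x - dl 0" using qna qprime by (simp add: prime_dvd_mult_iff)
    then have "H * int q dvd H * (dl x - dl 0)" by (rule mult_dvd_mono[OF dvd_refl])
    then have "H * int q dvd u * (H * (dl x - dl 0))" by (rule dvd_mult)
    then show ?thesis unfolding Nhq by (simp only: mult.assoc)
  qed
  have ii2: "\<not> int N dvd u * H * dl 0"
  proof
    assume "int N dvd u * H * dl 0"
    then have "H * int q dvd H * (u * dl 0)" unfolding Nhq by (simp add: ac_simps)
    then have "int q dvd u * dl 0" using Hpos by simp
    then have "int q dvd dl 0" using qnu qprime by (simp add: prime_dvd_mult_iff)
    then have "int q dvd (1 + a) * dl 0" by simp
    then have "int q dvd (1 + a) * dl 0 - ((1 + a) * dl 0 - Dd)" using dq[of 0] by (rule dvd_diff)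
    then have "int q dvd Dd" by simp
    with qnD show False ..
  qed
  have S2: "(\<Sum>x<N. T2 x) = 0"
    by (rule shift_ii[of h]) (use hW ii1 ii2 in \<open>simp_all add: H_def\<close>)
  from S1 S2 show ?thesis ..
qed


lemma case_c:
  assumes allq: "\<forall>q\<in>Q. q dvd d"
  shows "(\<Sum>k<N. T1 k) = 0 \<and> (\<Sum>x<N. T2 x) = 0"
proof -
  have "int M dvd int d" using allq by (intro M_dvd) auto
  then have "M dvd d" by (simp only: int_dvd_int_iff)
  then obtain d' where dd': "d = M * d'" by (auto simp: dvd_def)
  have d'pos: "d' \<noteq> 0" using dpos dd' by auto
  have d'lt: "d' < p ^ n" using dlt dd' N_eq M_pos by (simp add: mult.commute)
  have p1: "p > 1" using p3 by simp
  obtain e where de: "d' = p ^ multiplicity p d' * e" and pe: "\<not> p dvd e"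
    using multiplicity_decompose'[OF d'pos, of p] p1 by auto
  define j where "j = multiplicity p d'"
  have de': "d' = p ^ j * e" using de unfolding j_def .
  have "p ^ j \<le> d'" using de' d'pos by (cases e) auto
  then have "p ^ j < p ^ n" using d'lt by simp
  then have jn: "j < n" using p1 power_less_imp_less_exp by blast
  define h where "h = p ^ (n - j - 1) * M"
  define H where "H = int h"
  have pw: "p ^ (n - j - 1) * p ^ (j + 1) = p ^ n"
  proof -
    have "n - j - 1 + (j + 1) = n" using jn by simp
    then show ?thesis using power_add[of p "n - j - 1" "j + 1"] by simp
  qed
  have NH: "int N = H * int p ^ (j + 1)"
  proof -
    have "N = h * p ^ (j + 1)" unfolding h_def N_eq using pw by (simp add: ac_simps)
    then show ?thesis unfolding H_def by simp
  qed
  have Hpos: "H \<noteq> 0" using NH N_pos by auto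
  have Dde: "Dd = int M * (int p ^ j * int e)"
  proof -
    have "Dd = int d" unfolding Dd_def ..
    also have "\<dots> = int M * (int p ^ j * int e)" unfolding dd' de' by simp
    finally show ?thesis .
  qed
  have key: "int p * Dd * H = int N * (int M * int e)"
  proof -
    have "int p * Dd * H = int M * int M * int e * (int p ^ (n - j - 1) * int p ^ (j + 1))"
      unfolding Dde H_def h_def by (simp add: algebra_simps)
    also have "int p ^ (n - j - 1) * int p ^ (j + 1) = int p ^ n" using arg_cong[OF pw, of int] by simp
    finally show ?thesis unfolding Ni_eq by (simp add: algebra_simps)
  qed
  have Dpos: "Dd \<noteq> 0" using dpos unfolding Dd_def by simp
  have pnM: "\<not> int p dvd int M" using p_not_dvd_M by simp
  have pne: "\<not> int p dvd int e" using pe by simp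
  have pprime: "prime (int p)" using pp by simp
  have pnu: "\<not> int p dvd u" by (rule p_not_dvd_u)
  have hW: "int N dvd W x Dd H" for x
  proof -
    have "int N dvd int p * Dd * H" unfolding key by simp
    then show ?thesis using W_dvd by (rule dvd_trans)
  qed
  define G1 where "G1 x = (P (x + Dd + H) - P (x + Dd)) div H" for x
  define G2 where "G2 x = (P (x + Dd) - P x) div Dd" for x
  have V1: "P (x + Dd + H) - P (x + Dd) = H * G1 x" for x
    unfolding G1_def using gam_props(1)[OF Hpos, of "x + Dd"] .
  have V2: "P (x + Dd) - P x = Dd * G2 x" for x
    unfolding G2_def using gam_props(1)[OF Dpos, of x] .
  have m1: "[G1 x = a + (if int p dvd H then 0 else 1)] (mod int p)" for x
    unfolding G1_def using gam_props(2)[OF Hpos, of "x + Dd"] .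
  have m2: "[G2 x = a + (if int p dvd Dd then 0 else 1)] (mod int p)" for x
    unfolding G2_def using gam_props(2)[OF Dpos, of x] .
  have u1: "\<not> int p dvd G1 x" for x
    unfolding G1_def using gam_props(3)[OF Hpos, of "x + Dd"] .
  have u2: "\<not> int p dvd G2 x" for x
    unfolding G2_def using gam_props(3)[OF Dpos, of x] .
  have VB: "(P (x + Dd + H) - P (x + Dd)) * (P (x + Dd) - P x) = Dd * H * (G1 x * G2 x)" for x
    unfolding V1 V2 by (simp add: ac_simps)
  have i1: "int N dvd u * ((P (x + Dd + H) - P (x + Dd)) * (P (x + Dd) - P x)
      - (P (0 + Dd + H) - P (0 + Dd)) * (P (0 + Dd) - P 0))" for x
  proof -
    have "[G1 x * G2 x = G1 0 * G2 0] (mod int p)"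
      using cong_trans[OF m1[of x] cong_sym[OF m1[of 0]]] cong_trans[OF m2[of x] cong_sym[OF m2[of 0]]]
      by (rule cong_mult)
    then have "int p dvd G1 x * G2 x - G1 0 * G2 0" by (simp add: cong_iff_dvd_diff)
    then have "Dd * H * int p dvd Dd * H * (G1 x * G2 x - G1 0 * G2 0)" by (rule mult_dvd_mono[OF dvd_refl])
    moreover have "Dd * H * int p = int N * (int M * int e)" using key by (simp add: ac_simps)
    then have "int N dvd Dd * H * int p" by simp
    ultimately have "int N dvd Dd * H * (G1 x * G2 x - G1 0 * G2 0)" by (rule dvd_trans[rotated])
    then have "int N dvd u * (Dd * H * (G1 x * G2 x - G1 0 * G2 0))" by (rule dvd_mult)
    then show ?thesis unfolding VB by (simp add: algebra_simps)
  qed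
  have i2: "\<not> int N dvd u * ((P (0 + Dd + H) - P (0 + Dd)) * (P (0 + Dd) - P 0))"
  proof
    assume "int N dvd u * ((P (0 + Dd + H) - P (0 + Dd)) * (P (0 + Dd) - P 0))"
    then have "int N dvd u * (Dd * H * (G1 0 * G2 0))" unfolding VB .
    then have "int N * int p dvd u * (Dd * H * (G1 0 * G2 0)) * int p" by (rule mult_dvd_mono) simp
    also have "u * (Dd * H * (G1 0 * G2 0)) * int p = int N * (u * int M * int e * (G1 0 * G2 0))"
      using key by (simp add: algebra_simps)
    finally have "int p dvd u * int M * int e * (G1 0 * G2 0)" using N_pos by simp
    then show False using pprime pnu pnM pne u1[of 0] u2[of 0] by (simp add: prime_dvd_mult_iff)
  qed
  have S1: "(\<Sum>k<N. T1 k) = 0"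
    by (rule shift_i[of h]) (use hW i1 i2 in \<open>simp_all add: H_def\<close>)
  have pjN: "int p ^ (j + 1) dvd int N" unfolding NH by simp
  have "int p ^ j dvd int p ^ (j + 1)" by (rule le_imp_power_dvd) simp
  then have pjN': "int p ^ j dvd int N" using pjN by (rule dvd_trans)
  have pjD: "int p ^ j dvd Dd" unfolding Dde by simp
  have dl0: "dl x \<noteq> 0" for x
  proof
    assume "dl x = 0"
    then have "int N dvd Dd" using Rd[of x] by (simp add: cong_iff_dvd_diff)
    then have "N dvd d" unfolding Dd_def by simp
    with dpos dlt show False by (auto dest: dvd_imp_le)
  qed
  define g where "g x = (P (int x + dl x) - P (int x)) div dl x" for x
  have Pg: "P (int x + dl x) - P (int x) = dl x * g x" for x
    unfolding g_def using gam_props(1)[OF dl0] .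
  have gm: "[g x = a + (if int p dvd dl x then 0 else 1)] (mod int p)" for x
    unfolding g_def using gam_props(2)[OF dl0] .
  have gu: "\<not> int p dvd g x" for x
    unfolding g_def using gam_props(3)[OF dl0] .
  have Ndg: "int N dvd dl x * g x - Dd" for x
    using Rd[of x] Pg[of x] by (simp add: cong_iff_dvd_diff algebra_simps)
  have Mdl: "int M dvd dl x" for x
  proof (rule M_dvd, intro ballI)
    fix q assume q: "q \<in> Q"
    have qD: "int q dvd Dd" using allq q unfolding Dd_def by simp
    have "int q dvd dl x * g x - Dd" using q_dvd_N[OF q] Ndg by (rule dvd_trans)
    then have "int q dvd dl x * g x" using qD by (rule dvd_sub1)
    then have "int q dvd P (int x + dl x) - P (int x)" using Pg by simp
    with lin_q[OF q, of "int x" "dl x"] have "int q dvd (1 + a) * dl x" by (rule dvd_sub2)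
    moreover have "prime (int q)" using Qp q by simp
    ultimately show "int q dvd dl x" using q_not_dvd_a1[OF q] by (simp add: prime_dvd_mult_iff add.commute)
  qed
  have pjdl: "int p ^ j dvd dl x" for x
  proof (rule pj_cancel[OF gu])
    have "int p ^ j dvd dl x * g x - Dd" using pjN' Ndg by (rule dvd_trans)
    then show "int p ^ j dvd dl x * g x" using pjD by (rule dvd_sub1)
  qed
  have hW2: "int N dvd W (int x) (dl x) H" for x
  proof -
    have "int M * int p ^ j dvd dl x" using Mdl pjdl by (rule divides_mult) (use cop_pnM[of j] in \<open>simp only: coprime_commute\<close>)
    then have A: "int p * (int M * int p ^ j) * H dvd int p * dl x * H"
      by (intro mult_dvd_mono) auto
    have eq: "int p * (int M * int p ^ j) * H = int N * int M"
    proof -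
      have "int p * (int M * int p ^ j) * H = int M * int M * (int p ^ (n - j - 1) * int p ^ (j + 1))"
        unfolding H_def h_def by (simp add: algebra_simps)
      also have "int p ^ (n - j - 1) * int p ^ (j + 1) = int p ^ n" using arg_cong[OF pw, of int] by simp
      finally show ?thesis unfolding Ni_eq by (simp add: algebra_simps)
    qed
    have "int N dvd int p * (int M * int p ^ j) * H" unfolding eq by simp
    then have "int N dvd int p * dl x * H" using A by (rule dvd_trans)
    then show ?thesis using W_dvd by (rule dvd_trans)
  qed
  have pdl: "int p dvd dl x \<longleftrightarrow> int p dvd Dd" for x
  proof
    assume "int p dvd dl x"
    then have "int p dvd dl x * g x" by simp
    moreover have "int p dvd dl x * g x - Dd" using p_dvd_N Ndg by (rule dvd_trans)
    ultimately show "int p dvd Dd" by (rule dvd_sub2[rotated])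
  next
    assume "int p dvd Dd"
    moreover have "int p dvd dl x * g x - Dd" using p_dvd_N Ndg by (rule dvd_trans)
    ultimately have "int p dvd dl x * g x" by (rule dvd_sub1[rotated])
    then show "int p dvd dl x" using gu pprime by (simp add: prime_dvd_mult_iff)
  qed
  have gg: "int p dvd g x - g 0" for x
  proof -
    have c1: "[g x = a + (if int p dvd Dd then 0 else 1)] (mod int p)" using gm[of x] unfolding pdl[of x] .
    have c2: "[g 0 = a + (if int p dvd Dd then 0 else 1)] (mod int p)" using gm[of 0] unfolding pdl[of 0] .
    have "[g x = g 0] (mod int p)" using cong_trans[OF c1 cong_sym[OF c2]] .
    then show ?thesis by (simp add: cong_iff_dvd_diff)
  qed
  have pj1: "int p ^ (j + 1) dvd dl x - dl 0" for x
  proof (rule pj_cancel[OF gu[of x]])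
    have A: "int p ^ (j + 1) dvd (dl x * g x - Dd) - (dl 0 * g 0 - Dd)"
      using dvd_trans[OF pjN Ndg[of x]] dvd_trans[OF pjN Ndg[of 0]] by (rule dvd_diff)
    have "int p ^ j * int p dvd dl 0 * (g x - g 0)" using pjdl[of 0] gg[of x] by (rule mult_dvd_mono)
    then have B: "int p ^ (j + 1) dvd dl 0 * (g x - g 0)" by (simp add: ac_simps)
    have "int p ^ (j + 1) dvd ((dl x * g x - Dd) - (dl 0 * g 0 - Dd)) - dl 0 * (g x - g 0)"
      using A B by (rule dvd_diff)
    then show "int p ^ (j + 1) dvd (dl x - dl 0) * g x" by (simp add: algebra_simps)
  qed
  have ii1: "int N dvd u * H * (dl x - dl 0)" for x
  proof -
    have "H * int p ^ (j + 1) dvd H * (dl x - dl 0)" using pj1[of x] by (rule mult_dvd_mono[OF dvd_refl])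
    then have "H * int p ^ (j + 1) dvd u * (H * (dl x - dl 0))" by (rule dvd_mult)
    then show ?thesis unfolding NH by (simp only: mult.assoc)
  qed
  have ii2: "\<not> int N dvd u * H * dl 0"
  proof
    assume "int N dvd u * H * dl 0"
    then have "H * int p ^ (j + 1) dvd H * (u * dl 0)" unfolding NH by (simp add: ac_simps)
    then have "int p ^ (j + 1) dvd u * dl 0" using Hpos by simp
    moreover have "coprime (int p ^ (j + 1)) u"
      using pnu pprime by (simp add: prime_imp_coprime coprime_power_left_iff)
    ultimately have "int p ^ (j + 1) dvd dl 0" by (simp add: coprime_dvd_mult_right_iff)
    then have "int p ^ (j + 1) dvd dl 0 * g 0" by simp
    moreover have "int p ^ (j + 1) dvd dl 0 * g 0 - Dd" using pjN Ndg[of 0] by (rule dvd_trans)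
    ultimately have "int p ^ (j + 1) dvd Dd" by (rule dvd_sub2[rotated])
    then have "int p ^ j * int p dvd int p ^ j * (int M * int e)" unfolding Dde by (simp add: ac_simps)
    then have "int p dvd int M * int e" using pp by simp
    then show False using pprime pnM pne by (simp add: prime_dvd_mult_iff)
  qed
  have S2: "(\<Sum>x<N. T2 x) = 0"
    by (rule shift_ii[of h]) (use hW2 ii1 ii2 in \<open>simp_all add: H_def\<close>)
  from S1 S2 show ?thesis ..
qed


lemma both_zero:
  "autocorr N (interleave (zc_seq N u l) (pp_map N p a b)) d = 0
   \<and> autocorr N (interleave (zc_seq N u l) (perm_inv N (pp_map N p a b))) d = 0"
proof (cases "\<exists>q\<in>Q. \<not> q dvd d")
  case True
  then obtain q where "q \<in> Q" "\<not> q dvd d" by blast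
  then show ?thesis using case_b auto_i auto_ii by simp
next
  case False
  then show ?thesis using case_c auto_i auto_ii by simp
qed

end

lemma main_result:
  "bij_betw (pp_map N p a b) {..<N} {..<N}
    \<and> CAZAC N (interleave (zc_seq N u l) (pp_map N p a b))
    \<and> CAZAC N (interleave (zc_seq N u l) (perm_inv N (pp_map N p a b)))"
proof -
  have n1: "cmod (interleave (zc_seq N u l) f k) = 1" for f k
    unfolding interleave_def zc_Zi by (rule Zi_norm)
  show ?thesis unfolding CAZAC_def using pp_bij both_zero n1 by blast
qed

end

theorem theorem1:
  fixes p n N :: nat and Q :: "nat set" and a b u l :: int
  assumes "prime p" and "p \<ge> 3" and "n \<ge> 2"
    and "finite Q" and "\<forall>q\<in>Q. prime q \<and> q \<noteq> p \<and> (q - 1) dvd (p - 1)"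
    and "N = p ^ n * (\<Prod>Q)"
    and "\<not> [a = 0] (mod int p)" and "\<not> [a = -1] (mod int p)"
    and "\<forall>q\<in>Q. \<not> [a = -1] (mod int q)"
    and "coprime u (int N)"
  shows "bij_betw (pp_map N p a b) {..<N} {..<N}
    \<and> CAZAC N (interleave (zc_seq N u l) (pp_map N p a b))
    \<and> CAZAC N (interleave (zc_seq N u l) (perm_inv N (pp_map N p a b)))"
proof -
  interpret zcs p n Q a b u l N
    using assms by unfold_locales
  show ?thesis by (rule main_result)
qed

end
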